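(* For $a\in(0,1]$ and $b=\sqrt{1-a^2}$, let $\gamma_a(s)=\hat\gamma_a(s)=\big(a\cos\tfrac{s}{a},a\sin\tfrac{s}{a},b\big)\in S^2$ and $y_a=\gamma_a\otimes\hat\gamma_a:(s,\hat s)\mapsto\gamma_a(s)\otimes\hat\gamma_a(\hat s)\in S^8$, $(s,\hat s)\in[0,2\pi a]^2$. Then $y_a$ is a flat torus and $W(y_a)=2\pi^2(1+a^2)$; in particular $W(y_a)>2\pi^2$ for all $a\in(0,1]$ and $W(y_a)\to 2\pi^2$ as $a\to0$.
   Context: For $x,\hat x\in\mathbb{R}^3$ the tensor product is $x\otimes\hat x=(x_i\hat x_j)_{i,j=1}^3\in\mathbb{R}^9$ (lexicographic order). For a closed immersed surface $x:M\to S^N$ with mean curvature vector $\vec H$ and Gauss curvature $K$, the Willmore functional is $W(x)=\int_M(|\vec H|^2-K+1)\,dM$. *)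

theory Defs
  imports "HOL-Analysis.Analysis"
begin

text \<open>Surfaces are parametrized maps x :: real \<times> real \<Rightarrow> 'a (the ambient
 Euclidean space R^{N+1} containing S^N). Partial derivatives are taken coordinatewise.\<close>

definition pu :: "(real \<times> real \<Rightarrow> 'a::real_normed_vector) \<Rightarrow> real \<times> real \<Rightarrow> 'a" where
  "pu f p = vector_derivative (\<lambda>u. f (u, snd p)) (at (fst p))"

definition pv :: "(real \<times> real \<Rightarrow> 'a::real_normed_vector) \<Rightarrow> real \<times> real \<Rightarrow> 'a" where
  "pv f p = vector_derivative (\<lambda>v. f (fst p, v)) (at (snd p))"

definition fE :: "(real \<times> real \<Rightarrow> 'a::real_inner) \<Rightarrow> real \<times> real \<Rightarrow> real" where
  "fE x p = pu x p \<bullet> pu x p"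
definition fF :: "(real \<times> real \<Rightarrow> 'a::real_inner) \<Rightarrow> real \<times> real \<Rightarrow> real" where
  "fF x p = pu x p \<bullet> pv x p"
definition fG :: "(real \<times> real \<Rightarrow> 'a::real_inner) \<Rightarrow> real \<times> real \<Rightarrow> real" where
  "fG x p = pv x p \<bullet> pv x p"

definition immersed_at :: "(real \<times> real \<Rightarrow> 'a::euclidean_space) \<Rightarrow> real \<times> real \<Rightarrow> bool" where
  "immersed_at x p \<longleftrightarrow> x differentiable (at p) \<and>
     (\<forall>c1 c2::real. c1 *\<^sub>R pu x p + c2 *\<^sub>R pv x p = 0 \<longrightarrow> c1 = 0 \<and> c2 = 0)"

text \<open>Component of a vector w normal to the surface inside the unit sphere, i.e.
 orthogonal projection onto the orthogonal complement of span{x, x_u, x_v}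
 (for |x| = 1 and x_u, x_v tangent to the sphere).\<close>
definition nrm :: "(real \<times> real \<Rightarrow> 'a::euclidean_space) \<Rightarrow> real \<times> real \<Rightarrow> 'a \<Rightarrow> 'a" where
  "nrm x p w =
     (let E = fE x p; F = fF x p; G = fG x p; D = E * G - F * F;
          a = w \<bullet> pu x p; b = w \<bullet> pv x p
      in w - ((G * a - F * b) / D) *\<^sub>R pu x p - ((E * b - F * a) / D) *\<^sub>R pv x p
           - (w \<bullet> x p) *\<^sub>R x p)"

text \<open>Mean curvature vector of x : M \<rightarrow> S^N (second fundamental form h_ij = (x_ij)^\<bottom>,
  H = 1/2 g^{ij} h_ij).\<close>
definition mean_curv_vec :: "(real \<times> real \<Rightarrow> 'a::euclidean_space) \<Rightarrow> real \<times> real \<Rightarrow> 'a" where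
  "mean_curv_vec x p =
     (let E = fE x p; F = fF x p; G = fG x p; D = E * G - F * F;
          h11 = nrm x p (pu (pu x) p); h12 = nrm x p (pv (pu x) p); h22 = nrm x p (pv (pv x) p)
      in (1 / (2 * D)) *\<^sub>R (G *\<^sub>R h11 - (2 * F) *\<^sub>R h12 + E *\<^sub>R h22))"

text \<open>Gauss curvature of the induced metric (intrinsic, Brioschi formula).\<close>
definition gauss_curv :: "(real \<times> real \<Rightarrow> 'a::euclidean_space) \<Rightarrow> real \<times> real \<Rightarrow> real" where
  "gauss_curv x p =
     (let E = fE x p; F = fF x p; G = fG x p; D = E * G - F * F;
          Eu = pu (fE x) p; Ev = pv (fE x) p; Fu = pu (fF x) p; Fv = pv (fF x) p;
          Gu = pu (fG x) p; Gv = pv (fG x) p;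
          Evv = pv (pv (fE x)) p; Fuv = pv (pu (fF x)) p; Guu = pu (pu (fG x)) p;
          A = - Evv / 2 + Fuv - Guu / 2;
          det1 = A * (E * G - F * F) - (Eu / 2) * ((Fv - Gu / 2) * G - F * (Gv / 2))
                 + (Fu - Ev / 2) * ((Fv - Gu / 2) * F - E * (Gv / 2));
          det2 = - (Ev / 2) * ((Ev / 2) * G - F * (Gu / 2))
                 + (Gu / 2) * ((Ev / 2) * F - E * (Gu / 2))
      in (det1 - det2) / (D * D))"

definition willmore :: "(real \<times> real \<Rightarrow> 'a::euclidean_space) \<Rightarrow> real \<Rightarrow> real" where
  "willmore x L = integral (cbox (0, 0) (L, L))
     (\<lambda>p. ((norm (mean_curv_vec x p))\<^sup>2 - gauss_curv x p + 1)
          * sqrt (fE x p * fG x p - fF x p * fF x p))"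

text \<open>Tensor product R^3 \<times> R^3 \<rightarrow> R^9, indexed by pairs (i,j) (lexicographic order
  is an isometric relabelling of coordinates).\<close>
definition tensor :: "real^3 \<Rightarrow> real^3 \<Rightarrow> real^(3 \<times> 3)" where
  "tensor x y = (\<chi> ij. x $ fst ij * y $ snd ij)"

definition gam :: "real \<Rightarrow> real \<Rightarrow> real^3" where
  "gam a s = vector [a * cos (s / a), a * sin (s / a), sqrt (1 - a\<^sup>2)]"

definition ya :: "real \<Rightarrow> real \<times> real \<Rightarrow> real^(3 \<times> 3)" where
  "ya a p = tensor (gam a (fst p)) (gam a (snd p))"

end

theory Submission
  imports Defs
begin

definition g1 :: "real \<Rightarrow> real \<Rightarrow> real^3" where
  "g1 a s = vector [- sin (s / a), cos (s / a), 0]"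
definition g2 :: "real \<Rightarrow> real \<Rightarrow> real^3" where
  "g2 a s = vector [- cos (s / a) / a, - sin (s / a) / a, 0]"

lemma v3_alt: "(vector [x, y, z] :: real^3) = x *\<^sub>R vector [1,0,0] + y *\<^sub>R vector [0,1,0] + z *\<^sub>R vector [0,0,1]"
  by (simp add: vec_eq_iff forall_3 vector_3)

lemma inner3: "(vector [x, y, z] :: real^3) \<bullet> vector [x', y', z'] = x*x' + y*y' + z*z'"
  by (simp add: inner_vec_def sum_3 vector_3)

lemma bil_tensor: "bounded_bilinear tensor"
  unfolding bilinear_conv_bounded_bilinear[symmetric] bilinear_def
  by (auto intro!: linearI simp: tensor_def vec_eq_iff algebra_simps)

lemma tensor_inner: "tensor x y \<bullet> tensor z w = (x \<bullet> z) * (y \<bullet> w)"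
proof -
  have "tensor x y \<bullet> tensor z w = (\<Sum>ij\<in>UNIV. (x$fst ij * z$fst ij) * (y$snd ij * w$snd ij))"
    unfolding inner_vec_def tensor_def inner_real_def
    by (intro sum.cong refl) (simp add: mult_ac)
  also have "\<dots> = (\<Sum>(i,j)\<in>(UNIV::3 set)\<times>(UNIV::3 set). (x$i * z$i) * (y$j * w$j))"
    unfolding UNIV_Times_UNIV by (intro sum.cong refl) (simp add: split_beta)
  also have "\<dots> = (\<Sum>i\<in>UNIV. \<Sum>j\<in>UNIV. (x$i * z$i) * (y$j * w$j))"
    by (rule sum.cartesian_product[symmetric])
  also have "\<dots> = (\<Sum>i\<in>UNIV. x$i * z$i) * (\<Sum>j\<in>UNIV. y$j * w$j)"
    by (rule sum_product[symmetric])
  also have "\<dots> = (x \<bullet> z) * (y \<bullet> w)"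
    by (simp add: inner_vec_def)
  finally show ?thesis .
qed

lemma vec3_der:
  assumes "(f has_real_derivative f') (at s within S)" "(g has_real_derivative g') (at s within S)"
    "(h has_real_derivative h') (at s within S)"
  shows "((\<lambda>s. vector [f s, g s, h s] :: real^3) has_vector_derivative vector [f', g', h']) (at s within S)"
proof -
  have "((\<lambda>s. f s *\<^sub>R (vector [1,0,0]::real^3) + g s *\<^sub>R vector [0,1,0] + h s *\<^sub>R vector [0,0,1]) has_vector_derivative
     f' *\<^sub>R vector [1,0,0] + g' *\<^sub>R vector [0,1,0] + h' *\<^sub>R vector [0,0,1]) (at s within S)"
    using assms
    by (intro has_vector_derivative_add has_vector_derivative_scaleR[where g'=0, simplified]) simp_all
  then show ?thesis by (subst (1 2) v3_alt) simp
qed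

lemma gam_der: "a > 0 \<Longrightarrow> (gam a has_vector_derivative g1 a s) (at s within S)"
  unfolding gam_def[abs_def] g1_def
  apply (rule vec3_der)
    apply (rule derivative_eq_intros refl | simp)+
  done

lemma g1_der: "a > 0 \<Longrightarrow> (g1 a has_vector_derivative g2 a s) (at s within S)"
  unfolding g2_def g1_def[abs_def]
  apply (rule vec3_der)
    apply (rule derivative_eq_intros refl | simp)+
  done


lemma pu_tensor:
  assumes "\<And>u. (f has_vector_derivative f' u) (at u)"
  shows "pu (\<lambda>p. tensor (f (fst p)) (g (snd p))) = (\<lambda>p. tensor (f' (fst p)) (g (snd p)))"
proof
  fix p :: "real \<times> real"
  have "((\<lambda>u. tensor (f u) (g (snd p))) has_vector_derivative tensor (f (fst p)) 0 + tensor (f' (fst p)) (g (snd p))) (at (fst p))"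
    by (rule bounded_bilinear.has_vector_derivative[OF bil_tensor assms]) simp
  then show "pu (\<lambda>p. tensor (f (fst p)) (g (snd p))) p = tensor (f' (fst p)) (g (snd p))"
    unfolding pu_def by (simp add: vector_derivative_at bounded_bilinear.zero_right[OF bil_tensor])
qed

lemma pv_tensor:
  assumes "\<And>u. (g has_vector_derivative g' u) (at u)"
  shows "pv (\<lambda>p. tensor (f (fst p)) (g (snd p))) = (\<lambda>p. tensor (f (fst p)) (g' (snd p)))"
proof
  fix p :: "real \<times> real"
  have "((\<lambda>u. tensor (f (fst p)) (g u)) has_vector_derivative tensor (f (fst p)) (g' (snd p)) + tensor 0 (g (snd p))) (at (snd p))"
    by (rule bounded_bilinear.has_vector_derivative[OF bil_tensor _ assms]) simp
  then show "pv (\<lambda>p. tensor (f (fst p)) (g (snd p))) p = tensor (f (fst p)) (g' (snd p))"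
    unfolding pv_def by (simp add: vector_derivative_at bounded_bilinear.zero_left[OF bil_tensor])
qed

context
  fixes a :: real
  assumes a0: "0 < a" and a1: "a \<le> 1"
begin

lemma sc1: "(c * cos t) * (c * cos t) + (c * sin t) * (c * sin t) = c * (c::real)"
proof -
  have "(c * cos t) * (c * cos t) + (c * sin t) * (c * sin t) = (c * c) * ((sin t)\<^sup>2 + (cos t)\<^sup>2)"
    unfolding power2_eq_square by algebra
  then show ?thesis by simp
qed

lemma ip_gg: "gam a s \<bullet> gam a s = 1"
proof -
  have "sqrt (1 - a\<^sup>2) * sqrt (1 - a\<^sup>2) = 1 - a\<^sup>2" using a0 a1
    by (simp add: power_le_one)
  then show ?thesis unfolding gam_def inner3 sc1 by (simp add: power2_eq_square)
qed

lemma ip_11: "g1 a s \<bullet> g1 a s = 1"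
  unfolding g1_def inner3 using sin_cos_squared_add[of "s/a"] by (simp add: power2_eq_square)
lemma ip_g1: "gam a s \<bullet> g1 a s = 0"
  unfolding g1_def gam_def inner3 by (simp add: algebra_simps)
lemma ip_1g: "g1 a s \<bullet> gam a s = 0"
  unfolding g1_def gam_def inner3 by (simp add: algebra_simps)
lemma ip_2g: "g2 a s \<bullet> gam a s = -1"
proof -
  have "(- cos (s / a) / a) * (a * cos (s / a)) + (- sin (s / a) / a) * (a * sin (s / a))
     = - ((1 * cos (s / a)) * (1 * cos (s / a)) + (1 * sin (s / a)) * (1 * sin (s / a)))"
    using a0 by (simp add: field_simps)
  also have "\<dots> = -1" by (subst sc1) simp
  finally show ?thesis unfolding g2_def gam_def inner3 by simp
qed
lemma ip_g2: "gam a s \<bullet> g2 a s = -1"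
  using ip_2g by (simp add: inner_commute)
lemma ip_21: "g2 a s \<bullet> g1 a s = 0"
  unfolding g1_def g2_def inner3 by (simp add: algebra_simps)
lemma ip_12: "g1 a s \<bullet> g2 a s = 0"
  unfolding g1_def g2_def inner3 by (simp add: algebra_simps)
lemma ip_22: "g2 a s \<bullet> g2 a s = 1 / a\<^sup>2"
proof -
  have "(- cos (s / a) / a) * (- cos (s / a) / a) + (- sin (s / a) / a) * (- sin (s / a) / a)
     = ((1/a) * cos (s / a)) * ((1/a) * cos (s / a)) + ((1/a) * sin (s / a)) * ((1/a) * sin (s / a))"
    by simp
  also have "\<dots> = 1 / a\<^sup>2" by (simp only: sc1) (simp add: power2_eq_square)
  finally show ?thesis unfolding g2_def inner3 by simp
qed


lemma ya_eq: "ya a = (\<lambda>p. tensor (gam a (fst p)) (gam a (snd p)))"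
  by (simp add: ya_def[abs_def])

lemma gd: "(gam a has_vector_derivative g1 a u) (at u)" using gam_der[OF a0, of u UNIV] by simp
lemma g1d: "(g1 a has_vector_derivative g2 a u) (at u)" using g1_der[OF a0, of u UNIV] by simp

lemma pu_Y: "pu (ya a) = (\<lambda>p. tensor (g1 a (fst p)) (gam a (snd p)))"
  unfolding ya_eq by (rule pu_tensor[OF gd])
lemma pv_Y: "pv (ya a) = (\<lambda>p. tensor (gam a (fst p)) (g1 a (snd p)))"
  unfolding ya_eq by (rule pv_tensor[OF gd])
lemma puu_Y: "pu (pu (ya a)) = (\<lambda>p. tensor (g2 a (fst p)) (gam a (snd p)))"
  unfolding pu_Y by (rule pu_tensor[OF g1d])
lemma pvu_Y: "pv (pu (ya a)) = (\<lambda>p. tensor (g1 a (fst p)) (g1 a (snd p)))"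
  unfolding pu_Y by (rule pv_tensor[OF gd])
lemma pvv_Y: "pv (pv (ya a)) = (\<lambda>p. tensor (gam a (fst p)) (g2 a (snd p)))"
  unfolding pv_Y by (rule pv_tensor[OF g1d])

lemmas ips = ip_gg ip_11 ip_g1 ip_1g ip_2g ip_g2 ip_21 ip_12 ip_22 tensor_inner

lemma fE_Y: "fE (ya a) = (\<lambda>p. 1)" by (rule ext) (simp add: fE_def pu_Y ips)
lemma fF_Y: "fF (ya a) = (\<lambda>p. 0)" by (rule ext) (simp add: fF_def pu_Y pv_Y ips)
lemma fG_Y: "fG (ya a) = (\<lambda>p. 1)" by (rule ext) (simp add: fG_def pv_Y ips)

lemma pu_c: "pu (\<lambda>p. c) = (\<lambda>p. 0)" by (rule ext) (simp add: pu_def vector_derivative_const_at)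
lemma pv_c: "pv (\<lambda>p. c) = (\<lambda>p. 0)" by (rule ext) (simp add: pv_def vector_derivative_const_at)

lemma gauss_Y: "gauss_curv (ya a) p = 0"
  by (simp add: gauss_curv_def Let_def fE_Y fF_Y fG_Y pu_c pv_c)

lemma Hvec: "mean_curv_vec (ya a) p = (1/2) *\<^sub>R (tensor (g2 a (fst p)) (gam a (snd p)) + tensor (gam a (fst p)) (gam a (snd p))
     + (tensor (gam a (fst p)) (g2 a (snd p)) + tensor (gam a (fst p)) (gam a (snd p))))"
  apply (simp only: mean_curv_vec_def nrm_def puu_Y pvu_Y pvv_Y)
  apply (simp add: Let_def fE_Y fF_Y fG_Y pu_Y pv_Y ips ya_def)
  done

lemma H_Y: "(norm (mean_curv_vec (ya a) p))\<^sup>2 = (1 - a\<^sup>2) / (2 * a\<^sup>2)"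
  apply (simp only: Hvec power2_norm_eq_inner inner_scaleR_left inner_scaleR_right)
  apply (simp only: inner_add_left inner_add_right tensor_inner ips)
  using a0 apply (simp add: field_simps power2_eq_square)
  done

lemma norm_Y: "norm (ya a p) = 1"
  by (simp add: norm_eq_sqrt_inner ya_def ips)

lemma gam_per: "gam a (s + 2 * pi * a) = gam a s"
proof -
  have "(s + 2 * pi * a) / a = s / a + 2 * pi" using a0 by (simp add: field_simps)
  then show ?thesis by (simp add: gam_def)
qed

lemma per_Y: "ya a (s + 2 * pi * a, t) = ya a (s, t) \<and> ya a (s, t + 2 * pi * a) = ya a (s, t)"
  by (simp add: ya_def gam_per)

lemma imm_Y: "immersed_at (ya a) p"
  unfolding immersed_at_def
proof
  have d1: "((\<lambda>p. gam a (fst p)) has_derivative (\<lambda>h. fst h *\<^sub>R g1 a (fst p))) (at p)"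
    using diff_chain_at[OF has_derivative_fst[OF has_derivative_ident] gd[of "fst p", unfolded has_vector_derivative_def]]
    by (simp add: o_def)
  have d2: "((\<lambda>p. gam a (snd p)) has_derivative (\<lambda>h. snd h *\<^sub>R g1 a (snd p))) (at p)"
    using diff_chain_at[OF has_derivative_snd[OF has_derivative_ident] gd[of "snd p", unfolded has_vector_derivative_def]]
    by (simp add: o_def)
  show "ya a differentiable at p"
    unfolding ya_eq differentiable_def
    using bounded_bilinear.FDERIV[OF bil_tensor d1 d2] by blast
  show "\<forall>c1 c2. c1 *\<^sub>R pu (ya a) p + c2 *\<^sub>R pv (ya a) p = 0 \<longrightarrow> c1 = 0 \<and> c2 = 0"
  proof (intro allI impI)
    fix c1 c2 assume h: "c1 *\<^sub>R pu (ya a) p + c2 *\<^sub>R pv (ya a) p = 0"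
    have hh: "(c1 *\<^sub>R pu (ya a) p + c2 *\<^sub>R pv (ya a) p) \<bullet> pu (ya a) p = 0"
      "(c1 *\<^sub>R pu (ya a) p + c2 *\<^sub>R pv (ya a) p) \<bullet> pv (ya a) p = 0" using h by simp_all
    have u: "pu (ya a) p \<bullet> pu (ya a) p = 1" "pv (ya a) p \<bullet> pv (ya a) p = 1"
      "pu (ya a) p \<bullet> pv (ya a) p = 0" "pv (ya a) p \<bullet> pu (ya a) p = 0"
      by (simp_all add: pu_Y pv_Y ips)
    show "c1 = 0 \<and> c2 = 0" using hh
      by (simp only: inner_add_left inner_scaleR_left u) simp
  qed
qed

lemma W_Y: "willmore (ya a) (2 * pi * a) = 2 * pi\<^sup>2 * (1 + a\<^sup>2)"
proof -
  have L: "0 \<le> 2 * pi * a" using a0 by simp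
  have c: "measure lborel (cbox (0::real, 0::real) (2 * pi * a, 2 * pi * a)) = (2 * pi * a) * (2 * pi * a)"
    unfolding content_Pair using L by simp
  have f: "(\<lambda>p. ((norm (mean_curv_vec (ya a) p))\<^sup>2 - gauss_curv (ya a) p + 1)
          * sqrt (fE (ya a) p * fG (ya a) p - fF (ya a) p * fF (ya a) p)) = (\<lambda>p. (1 - a\<^sup>2) / (2 * a\<^sup>2) + 1)"
    by (rule ext) (simp only: H_Y gauss_Y fE_Y fF_Y fG_Y, simp)
  have "willmore (ya a) (2 * pi * a) = (2 * pi * a) * (2 * pi * a) * ((1 - a\<^sup>2) / (2 * a\<^sup>2) + 1)"
    unfolding willmore_def f integral_const c by simp
  also have "\<dots> = 2 * pi\<^sup>2 * (1 + a\<^sup>2)"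
    using a0 by (simp add: field_simps power2_eq_square)
  finally show ?thesis .
qed

end

theorem mainTheorem5:
  shows "(\<forall>a. 0 < a \<and> a \<le> 1 \<longrightarrow>
            (\<forall>p. norm (ya a p) = 1)
          \<and> (\<forall>s t. ya a (s + 2 * pi * a, t) = ya a (s, t) \<and> ya a (s, t + 2 * pi * a) = ya a (s, t))
          \<and> (\<forall>p. immersed_at (ya a) p)
          \<and> (\<forall>p. gauss_curv (ya a) p = 0)
          \<and> willmore (ya a) (2 * pi * a) = 2 * pi\<^sup>2 * (1 + a\<^sup>2)
          \<and> willmore (ya a) (2 * pi * a) > 2 * pi\<^sup>2)
       \<and> ((\<lambda>a. willmore (ya a) (2 * pi * a)) \<longlongrightarrow> 2 * pi\<^sup>2) (at_right 0)"
proof (intro conjI allI impI)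
  fix a :: real assume h: "0 < a \<and> a \<le> 1"
  then have a0: "0 < a" and a1: "a \<le> 1" by auto
  show "\<And>p. norm (ya a p) = 1" by (rule norm_Y[OF a0 a1])
  show "\<And>s t. ya a (s + 2 * pi * a, t) = ya a (s, t)" using per_Y[OF a0 a1] by blast
  show "\<And>s t. ya a (s, t + 2 * pi * a) = ya a (s, t)" using per_Y[OF a0 a1] by blast
  show "\<And>p. immersed_at (ya a) p" by (rule imm_Y[OF a0 a1])
  show "\<And>p. gauss_curv (ya a) p = 0" by (rule gauss_Y[OF a0 a1])
  show "willmore (ya a) (2 * pi * a) = 2 * pi\<^sup>2 * (1 + a\<^sup>2)" by (rule W_Y[OF a0 a1])
  show "willmore (ya a) (2 * pi * a) > 2 * pi\<^sup>2" using W_Y[OF a0 a1] a0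
    by (simp add: algebra_simps)
next
  have ev: "\<forall>\<^sub>F a in at_right 0. 2 * pi\<^sup>2 * (1 + a\<^sup>2) = willmore (ya a) (2 * pi * a)"
  proof -
    have "\<forall>\<^sub>F a in at_right (0::real). a \<in> {0<..<1}"
      by (rule eventually_at_right_real) simp
    then show ?thesis by eventually_elim (simp add: W_Y)
  qed
  have "((\<lambda>a::real. 2 * pi\<^sup>2 * (1 + a\<^sup>2)) \<longlongrightarrow> 2 * pi\<^sup>2 * (1 + 0\<^sup>2)) (at_right 0)"
    by (intro tendsto_intros)
  then have "((\<lambda>a::real. 2 * pi\<^sup>2 * (1 + a\<^sup>2)) \<longlongrightarrow> 2 * pi\<^sup>2) (at_right 0)" by simp
  then show "((\<lambda>a. willmore (ya a) (2 * pi * a)) \<longlongrightarrow> 2 * pi\<^sup>2) (at_right 0)"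
    using ev by (rule Lim_transform_eventually)
qed

end
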